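(* Let $A$ be a sub-tree of $T$, let $S_1,S_2\subseteq V_A$ and let $x\in[0,d(r_A)]$. Then $$G(S_1,x)+G(S_2,x)\le G(S_1\cup S_2,x)+G(S_1\cap S_2,x).$$
   Context: Setting. $T$ is a finite tree rooted at $r_T$, node set $V_T$; every edge $e$ has weight $w_e\ge 0$. Every node $v$ has a probability $\pi_v\in(0,1]$ and a prize $p_v\in\mathbb{R}$. $d(v)$ is the total weight of the path from $r_T$ to $v$. A random set $\omega\subseteq V_T$ contains each node $v$ independently with probability $\pi_v$. For $S\subseteq V_T$, $P(S)=1-\prod_{s\in S}(1-\pi_s)$ ($P(\emptyset)=0$). For a node $a$, the sub-tree $A$ rooted at $r_A=a$ consists of $a$ and all its descendants, with node set $V_A$. For $Q\subseteq V_T$, $W(Q)$ is the total weight of the edges lying on at least one path from $r_T$ to a node of $Q$. For $S\subseteq V_A$ and $x\le d(r_A)$ the expected profit is $G(S,x)=\sum_{s\in S}p_s\pi_s-\mathbb{E}[W(S\cap\omega)]+x\,P(S)$. *)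

theory Defs
  imports Main "HOL-Library.FuncSet" Complex_Main
begin

text \<open>The edge between par v and v
(for v a non-root node) is identified with its child endpoint v; its weight is w v.\<close>

definition rooted_tree :: "'a set \<Rightarrow> 'a \<Rightarrow> ('a \<Rightarrow> 'a) \<Rightarrow> bool" where
  "rooted_tree V r par \<longleftrightarrow> finite V \<and> r \<in> V \<and>
     (\<forall>v\<in>V. v \<noteq> r \<longrightarrow> par v \<in> V) \<and>
     (\<forall>v\<in>V. \<exists>n. (par ^^ n) v = r)"

definition path_nodes :: "'a \<Rightarrow> ('a \<Rightarrow> 'a) \<Rightarrow> 'a \<Rightarrow> 'a set" where
  "path_nodes r par v = {u. \<exists>k. (par ^^ k) v = u \<and> (\<forall>j<k. (par ^^ j) v \<noteq> r)}"

definition path_edges :: "'a \<Rightarrow> ('a \<Rightarrow> 'a) \<Rightarrow> 'a \<Rightarrow> 'a set" where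
  "path_edges r par v = path_nodes r par v - {r}"

definition depth :: "'a \<Rightarrow> ('a \<Rightarrow> 'a) \<Rightarrow> ('a \<Rightarrow> real) \<Rightarrow> 'a \<Rightarrow> real" where
  "depth r par w v = (\<Sum>e\<in>path_edges r par v. w e)"

definition Wt :: "'a \<Rightarrow> ('a \<Rightarrow> 'a) \<Rightarrow> ('a \<Rightarrow> real) \<Rightarrow> 'a set \<Rightarrow> real" where
  "Wt r par w Q = (\<Sum>e\<in>(\<Union>q\<in>Q. path_edges r par q). w e)"

definition subtree_nodes :: "'a set \<Rightarrow> 'a \<Rightarrow> ('a \<Rightarrow> 'a) \<Rightarrow> 'a \<Rightarrow> 'a set" where
  "subtree_nodes V r par a = {v\<in>V. a \<in> path_nodes r par v}"

text \<open>Probability of the outcome \<omega> (a subset of V) when each node v is included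
independently with probability \<pi> v.\<close>
definition omega_prob :: "'a set \<Rightarrow> ('a \<Rightarrow> real) \<Rightarrow> 'a set \<Rightarrow> real" where
  "omega_prob V \<pi> \<omega> = (\<Prod>v\<in>\<omega>. \<pi> v) * (\<Prod>v\<in>V - \<omega>. 1 - \<pi> v)"

definition Pr :: "('a \<Rightarrow> real) \<Rightarrow> 'a set \<Rightarrow> real" where
  "Pr \<pi> S = 1 - (\<Prod>s\<in>S. 1 - \<pi> s)"

definition EW :: "'a set \<Rightarrow> 'a \<Rightarrow> ('a \<Rightarrow> 'a) \<Rightarrow> ('a \<Rightarrow> real) \<Rightarrow> ('a \<Rightarrow> real) \<Rightarrow> 'a set \<Rightarrow> real" where
  "EW V r par w \<pi> S = (\<Sum>\<omega>\<in>Pow V. omega_prob V \<pi> \<omega> * Wt r par w (S \<inter> \<omega>))"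

definition G :: "'a set \<Rightarrow> 'a \<Rightarrow> ('a \<Rightarrow> 'a) \<Rightarrow> ('a \<Rightarrow> real) \<Rightarrow> ('a \<Rightarrow> real) \<Rightarrow> ('a \<Rightarrow> real)
    \<Rightarrow> 'a set \<Rightarrow> real \<Rightarrow> real" where
  "G V r par w \<pi> p S x = (\<Sum>s\<in>S. p s * \<pi> s) - EW V r par w \<pi> S + x * Pr \<pi> S"

end

theory Submission
  imports Defs
begin

lemma prob_total:
  fixes \<pi> :: "'a \<Rightarrow> real"
  assumes "finite C"
  shows "(\<Sum>\<omega>\<in>Pow C. (\<Prod>v\<in>\<omega>. \<pi> v) * (\<Prod>v\<in>C - \<omega>. 1 - \<pi> v)) = 1"
  using prod_add[OF assms, of \<pi> "\<lambda>v. 1 - \<pi> v"] by simp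

lemma prob_avoid:
  fixes \<pi> :: "'a \<Rightarrow> real"
  assumes fin: "finite V" and BV: "B \<subseteq> V"
  shows "(\<Sum>\<omega>\<in>Pow V. omega_prob V \<pi> \<omega> * (if B \<inter> \<omega> = {} then 1 else 0)) = (\<Prod>b\<in>B. 1 - \<pi> b)"
proof -
  have "(\<Sum>\<omega>\<in>Pow V. omega_prob V \<pi> \<omega> * (if B \<inter> \<omega> = {} then 1 else 0))
      = (\<Sum>\<omega>\<in>Pow (V - B). omega_prob V \<pi> \<omega>)"
    by (rule sum.mono_neutral_cong_right) (use fin in auto)
  also have "\<dots> = (\<Sum>\<omega>\<in>Pow (V - B). ((\<Prod>v\<in>\<omega>. \<pi> v) * (\<Prod>v\<in>(V - B) - \<omega>. 1 - \<pi> v)) * (\<Prod>b\<in>B. 1 - \<pi> b))"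
  proof (rule sum.cong[OF refl])
    fix \<omega> assume "\<omega> \<in> Pow (V - B)"
    then have "V - \<omega> = ((V - B) - \<omega>) \<union> B" and "((V - B) - \<omega>) \<inter> B = {}" using BV by auto
    then have "(\<Prod>v\<in>V - \<omega>. 1 - \<pi> v) = (\<Prod>v\<in>(V - B) - \<omega>. 1 - \<pi> v) * (\<Prod>b\<in>B. 1 - \<pi> b)"
      using fin BV by (simp add: prod.union_disjoint finite_subset)
    then show "omega_prob V \<pi> \<omega> = ((\<Prod>v\<in>\<omega>. \<pi> v) * (\<Prod>v\<in>(V - B) - \<omega>. 1 - \<pi> v)) * (\<Prod>b\<in>B. 1 - \<pi> b)"
      unfolding omega_prob_def by simp
  qed
  also have "\<dots> = (\<Prod>b\<in>B. 1 - \<pi> b)"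
    using prob_total[of "V - B" \<pi>] fin by (simp add: sum_distrib_right[symmetric])
  finally show ?thesis .
qed

lemma prob_hit:
  fixes \<pi> :: "'a \<Rightarrow> real"
  assumes fin: "finite V" and BV: "B \<subseteq> V"
  shows "(\<Sum>\<omega>\<in>Pow V. omega_prob V \<pi> \<omega> * (if B \<inter> \<omega> \<noteq> {} then 1 else 0)) = Pr \<pi> B"
proof -
  have "\<And>\<omega>. omega_prob V \<pi> \<omega> * (if B \<inter> \<omega> \<noteq> {} then 1 else 0)
     = omega_prob V \<pi> \<omega> - omega_prob V \<pi> \<omega> * (if B \<inter> \<omega> = {} then 1 else 0)" by simp
  then have "(\<Sum>\<omega>\<in>Pow V. omega_prob V \<pi> \<omega> * (if B \<inter> \<omega> \<noteq> {} then 1 else 0))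
      = (\<Sum>\<omega>\<in>Pow V. omega_prob V \<pi> \<omega>) - (\<Sum>\<omega>\<in>Pow V. omega_prob V \<pi> \<omega> * (if B \<inter> \<omega> = {} then 1 else 0))"
    by (simp add: sum_subtractf)
  also have "\<dots> = 1 - (\<Prod>b\<in>B. 1 - \<pi> b)"
    using prob_avoid[OF fin BV, of \<pi>] prob_total[OF fin, of \<pi>] unfolding omega_prob_def by simp
  finally show ?thesis unfolding Pr_def .
qed

definition Eset :: "'a \<Rightarrow> ('a \<Rightarrow> 'a) \<Rightarrow> 'a set \<Rightarrow> 'a \<Rightarrow> 'a set" where
  "Eset r par S e = {q\<in>S. e \<in> path_edges r par q}"

lemma EW_eq:
  assumes fin: "finite V" and SV: "S \<subseteq> V" and finU: "finite U"
    and PU: "\<And>q. q \<in> S \<Longrightarrow> path_edges r par q \<subseteq> U"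
  shows "EW V r par w \<pi> S = (\<Sum>e\<in>U. w e * Pr \<pi> (Eset r par S e))"
proof -
  have Wt: "Wt r par w (S \<inter> \<omega>) = (\<Sum>e\<in>U. w e * (if Eset r par S e \<inter> \<omega> \<noteq> {} then 1 else 0))" for \<omega>
  proof -
    have "(\<Union>q\<in>S \<inter> \<omega>. path_edges r par q) = {e\<in>U. Eset r par S e \<inter> \<omega> \<noteq> {}}"
      using PU unfolding Eset_def by blast
    then have "Wt r par w (S \<inter> \<omega>) = sum w {e\<in>U. Eset r par S e \<inter> \<omega> \<noteq> {}}"
      unfolding Wt_def by simp
    also have "\<dots> = (\<Sum>e\<in>U. if Eset r par S e \<inter> \<omega> \<noteq> {} then w e else 0)"
      using finU by (simp add: sum.inter_filter)
    finally show ?thesis by (simp add: if_distrib cong: if_cong)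
  qed
  have "EW V r par w \<pi> S = (\<Sum>\<omega>\<in>Pow V. \<Sum>e\<in>U. omega_prob V \<pi> \<omega> * (w e * (if Eset r par S e \<inter> \<omega> \<noteq> {} then 1 else 0)))"
    unfolding EW_def Wt by (simp add: sum_distrib_left)
  also have "\<dots> = (\<Sum>e\<in>U. \<Sum>\<omega>\<in>Pow V. w e * (omega_prob V \<pi> \<omega> * (if Eset r par S e \<inter> \<omega> \<noteq> {} then 1 else 0)))"
    by (subst sum.swap) (simp add: algebra_simps)
  also have "\<dots> = (\<Sum>e\<in>U. w e * Pr \<pi> (Eset r par S e))"
  proof (rule sum.cong[OF refl])
    fix e assume "e \<in> U"
    have "Eset r par S e \<subseteq> V" using SV unfolding Eset_def by auto
    then show "(\<Sum>\<omega>\<in>Pow V. w e * (omega_prob V \<pi> \<omega> * (if Eset r par S e \<inter> \<omega> \<noteq> {} then 1 else 0))) = w e * Pr \<pi> (Eset r par S e)"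
      using prob_hit[OF fin, of "Eset r par S e" \<pi>] by (simp add: sum_distrib_left[symmetric])
  qed
  finally show ?thesis .
qed

lemma Pr_submod:
  fixes \<pi> :: "'a \<Rightarrow> real"
  assumes "finite A" "finite B" "\<forall>v\<in>A \<union> B. 0 \<le> \<pi> v \<and> \<pi> v \<le> 1"
  shows "Pr \<pi> (A \<union> B) + Pr \<pi> (A \<inter> B) \<le> Pr \<pi> A + Pr \<pi> B"
proof -
  define f where "f = (\<lambda>v. 1 - \<pi> v)"
  define c where "c = prod f (A \<inter> B)"
  define s where "s = prod f (A - B)"
  define t where "t = prod f (B - A)"
  have A: "prod f A = c * s" unfolding c_def s_def
    using prod.Int_Diff[OF assms(1), of f B] .
  have B: "prod f B = c * t" unfolding c_def t_def
    using prod.Int_Diff[OF assms(2), of f A] by (simp add: Int_commute)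
  have U: "prod f (A \<union> B) = c * s * t"
  proof -
    have "A \<union> B = ((A \<inter> B) \<union> (A - B)) \<union> (B - A)" by auto
    moreover have "prod f (((A \<inter> B) \<union> (A - B)) \<union> (B - A)) = prod f ((A \<inter> B) \<union> (A - B)) * prod f (B - A)"
      by (rule prod.union_disjoint) (use assms in auto)
    ultimately have "prod f (A \<union> B) = prod f ((A \<inter> B) \<union> (A - B)) * prod f (B - A)"
      by simp
    also have "(A \<inter> B) \<union> (A - B) = A" by auto
    also have "prod f A = c * s" by (rule A)
    finally show ?thesis unfolding t_def by simp
  qed
  have rng: "\<And>X. X \<subseteq> A \<union> B \<Longrightarrow> 0 \<le> prod f X \<and> prod f X \<le> 1"
    using assms(3) unfolding f_def by (auto intro!: prod_nonneg prod_le_1)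
  have "0 \<le> c" "0 \<le> 1 - s" "0 \<le> 1 - t" using rng[of "A \<inter> B"] rng[of "A - B"] rng[of "B - A"]
    unfolding c_def s_def t_def by auto
  then have "0 \<le> c * (1 - s) * (1 - t)" by simp
  moreover have "\<And>X. Pr \<pi> X = 1 - prod f X" unfolding Pr_def f_def by simp
  then have "Pr \<pi> A = 1 - c * s" "Pr \<pi> B = 1 - c * t" "Pr \<pi> (A \<union> B) = 1 - c * s * t"
    "Pr \<pi> (A \<inter> B) = 1 - c" using A B U unfolding c_def by simp_all
  ultimately show ?thesis by (simp add: algebra_simps)
qed

lemma path_nodes_in_V:
  assumes tree: "rooted_tree V r par" and q: "q \<in> V"
  shows "path_nodes r par q \<subseteq> V"
proof -
  have "\<forall>j<k. (par ^^ j) q \<noteq> r \<Longrightarrow> (par ^^ k) q \<in> V" for k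
  proof (induction k)
    case 0 then show ?case using q by simp
  next
    case (Suc k)
    then have "(par ^^ k) q \<in> V" "(par ^^ k) q \<noteq> r" by auto
    then show ?case using tree unfolding rooted_tree_def by auto
  qed
  then show ?thesis unfolding path_nodes_def by blast
qed

lemma path_edges_sub:
  assumes "a \<in> path_nodes r par q"
  shows "path_edges r par a \<subseteq> path_edges r par q"
proof
  fix e assume "e \<in> path_edges r par a"
  then obtain j where j: "(par ^^ j) a = e" "\<forall>i<j. (par ^^ i) a \<noteq> r" "e \<noteq> r"
    unfolding path_edges_def path_nodes_def by auto
  obtain k where k: "(par ^^ k) q = a" "\<forall>i<k. (par ^^ i) q \<noteq> r"
    using assms unfolding path_nodes_def by auto
  have "(par ^^ (j + k)) q = e" using j k by (simp add: funpow_add)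
  moreover have "\<forall>i<j+k. (par ^^ i) q \<noteq> r"
  proof (intro allI impI)
    fix i assume i: "i < j + k"
    show "(par ^^ i) q \<noteq> r"
    proof (cases "i < k")
      case True then show ?thesis using k by auto
    next
      case False
      have ii: "i = (i - k) + k" using False by simp
      have "(par ^^ ((i - k) + k)) q = (par ^^ (i - k)) ((par ^^ k) q)"
        by (simp only: funpow_add comp_apply)
      then have "(par ^^ i) q = (par ^^ (i - k)) a" using k ii by simp
      then show ?thesis using j i False by auto
    qed
  qed
  ultimately show "e \<in> path_edges r par q" using j unfolding path_edges_def path_nodes_def by auto
qed

theorem proposition2:
  fixes V :: "'a set" and r :: 'a and par :: "'a \<Rightarrow> 'a"
    and w \<pi> p :: "'a \<Rightarrow> real" and a :: 'a and S1 S2 :: "'a set" and x :: real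
  assumes tree: "rooted_tree V r par"
    and w_nonneg: "\<forall>v\<in>V - {r}. w v \<ge> 0"
    and pi_range: "\<forall>v\<in>V. 0 < \<pi> v \<and> \<pi> v \<le> 1"
    and a_in: "a \<in> V"
    and S1: "S1 \<subseteq> subtree_nodes V r par a"
    and S2: "S2 \<subseteq> subtree_nodes V r par a"
    and x_range: "0 \<le> x" "x \<le> depth r par w a"
  shows "G V r par w \<pi> p S1 x + G V r par w \<pi> p S2 x
           \<le> G V r par w \<pi> p (S1 \<union> S2) x + G V r par w \<pi> p (S1 \<inter> S2) x"
proof -
  have fin: "finite V" using tree unfolding rooted_tree_def by auto
  define U where "U = V - {r}"
  define P where "P = path_edges r par a"
  define D where "D = depth r par w a"
  have finU: "finite U" using fin unfolding U_def by auto
  have peU: "q \<in> V \<Longrightarrow> path_edges r par q \<subseteq> U" for q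
    using path_nodes_in_V[OF tree] unfolding U_def path_edges_def by auto
  have PU: "P \<subseteq> U" using peU[OF a_in] unfolding P_def .
  have sub: "subtree_nodes V r par a \<subseteq> V" unfolding subtree_nodes_def by auto
  have Gform: "G V r par w \<pi> p S x = (\<Sum>s\<in>S. p s * \<pi> s) - (D - x) * Pr \<pi> S
      - (\<Sum>e\<in>U - P. w e * Pr \<pi> (Eset r par S e))"
    if S: "S \<subseteq> subtree_nodes V r par a" for S
  proof -
    have SV: "S \<subseteq> V" using S sub by auto
    have EW: "EW V r par w \<pi> S = (\<Sum>e\<in>U. w e * Pr \<pi> (Eset r par S e))"
      by (rule EW_eq[OF fin SV finU]) (use peU SV in auto)
    also have "\<dots> = (\<Sum>e\<in>P. w e * Pr \<pi> (Eset r par S e)) + (\<Sum>e\<in>U - P. w e * Pr \<pi> (Eset r par S e))"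
      using PU finU by (metis add.commute sum.subset_diff)
    also have "(\<Sum>e\<in>P. w e * Pr \<pi> (Eset r par S e)) = (\<Sum>e\<in>P. w e * Pr \<pi> S)"
    proof (rule sum.cong[OF refl])
      fix e assume e: "e \<in> P"
      have "Eset r par S e = S"
      proof -
        have "q \<in> S \<Longrightarrow> e \<in> path_edges r par q" for q
          using S e path_edges_sub[of a r par q] unfolding subtree_nodes_def P_def by auto
        then show ?thesis unfolding Eset_def by auto
      qed
      then show "w e * Pr \<pi> (Eset r par S e) = w e * Pr \<pi> S" by simp
    qed
    also have "\<dots> = D * Pr \<pi> S" unfolding D_def depth_def P_def by (simp add: sum_distrib_right)
    finally show ?thesis unfolding G_def by (simp add: algebra_simps)
  qed
  have S1V: "S1 \<subseteq> V" and S2V: "S2 \<subseteq> V" using S1 S2 sub by auto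
  have f1: "finite S1" "finite S2" using S1V S2V fin finite_subset by auto
  have pi01: "\<forall>v\<in>X. 0 \<le> \<pi> v \<and> \<pi> v \<le> 1" if "X \<subseteq> V" for X
    using pi_range that by force
  have lin: "(\<Sum>s\<in>S1 \<union> S2. p s * \<pi> s) + (\<Sum>s\<in>S1 \<inter> S2. p s * \<pi> s)
      = (\<Sum>s\<in>S1. p s * \<pi> s) + (\<Sum>s\<in>S2. p s * \<pi> s)"
    using f1 by (rule sum.union_inter)
  have Dx: "0 \<le> D - x" using x_range unfolding D_def by simp
  have PrS: "(D - x) * (Pr \<pi> (S1 \<union> S2) + Pr \<pi> (S1 \<inter> S2)) \<le> (D - x) * (Pr \<pi> S1 + Pr \<pi> S2)"
    using Pr_submod[OF f1 pi01] S1V S2V Dx by (intro mult_left_mono) auto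
  have edge: "(\<Sum>e\<in>U - P. w e * Pr \<pi> (Eset r par (S1 \<union> S2) e)) + (\<Sum>e\<in>U - P. w e * Pr \<pi> (Eset r par (S1 \<inter> S2) e))
     \<le> (\<Sum>e\<in>U - P. w e * Pr \<pi> (Eset r par S1 e)) + (\<Sum>e\<in>U - P. w e * Pr \<pi> (Eset r par S2 e))"
  proof -
    have "(\<Sum>e\<in>U - P. w e * Pr \<pi> (Eset r par (S1 \<union> S2) e) + w e * Pr \<pi> (Eset r par (S1 \<inter> S2) e))
       \<le> (\<Sum>e\<in>U - P. w e * Pr \<pi> (Eset r par S1 e) + w e * Pr \<pi> (Eset r par S2 e))"
    proof (rule sum_mono)
      fix e assume e: "e \<in> U - P"
      have w0: "0 \<le> w e" using e w_nonneg unfolding U_def by auto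
      have u: "Eset r par (S1 \<union> S2) e = Eset r par S1 e \<union> Eset r par S2 e"
        and i: "Eset r par (S1 \<inter> S2) e = Eset r par S1 e \<inter> Eset r par S2 e"
        unfolding Eset_def by auto
      have fe: "finite (Eset r par S1 e)" "finite (Eset r par S2 e)"
        using f1 unfolding Eset_def by auto
      have "Eset r par S1 e \<union> Eset r par S2 e \<subseteq> V" using S1V S2V unfolding Eset_def by auto
      then have "Pr \<pi> (Eset r par (S1 \<union> S2) e) + Pr \<pi> (Eset r par (S1 \<inter> S2) e)
          \<le> Pr \<pi> (Eset r par S1 e) + Pr \<pi> (Eset r par S2 e)"
        unfolding u i by (intro Pr_submod[OF fe] pi01)
      then have "w e * (Pr \<pi> (Eset r par (S1 \<union> S2) e) + Pr \<pi> (Eset r par (S1 \<inter> S2) e))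
          \<le> w e * (Pr \<pi> (Eset r par S1 e) + Pr \<pi> (Eset r par S2 e))"
        using w0 by (rule mult_left_mono)
      then show "w e * Pr \<pi> (Eset r par (S1 \<union> S2) e) + w e * Pr \<pi> (Eset r par (S1 \<inter> S2) e)
         \<le> w e * Pr \<pi> (Eset r par S1 e) + w e * Pr \<pi> (Eset r par S2 e)"
        by (simp add: algebra_simps)
    qed
    then show ?thesis by (simp add: sum.distrib)
  qed
  have U12: "S1 \<union> S2 \<subseteq> subtree_nodes V r par a" and I12: "S1 \<inter> S2 \<subseteq> subtree_nodes V r par a"
    using S1 S2 by auto
  show ?thesis
    unfolding Gform[OF S1] Gform[OF S2] Gform[OF U12] Gform[OF I12]
    using lin PrS edge by (simp add: algebra_simps)
qed

end
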